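(* Let $n\ge2$, $p>n$, and let $A$ satisfy: (i) $A\in C([0,+\infty))$; (ii) $\delta\le A\le L$ for positive constants $\delta,L$; (iii) $t\mapsto t^{p-1}A(t)$ is strictly increasing for $t>0$. Let $f\in L^\infty(\mathbb{R}^n)$ satisfy $|f(x)|\le C_f|x|^{-(p+\epsilon)}$ for all $|x|$ sufficiently large, for positive constants $C_f,\epsilon$. Then there exists a family $\{v_a\}_{a\ge0}$ of radially symmetric functions $v_a=v_a(r)$, $r=|x|$, each a weak supersolution of $-\mathrm{div}(|\nabla v|^{p-2}A(|\nabla v|)\nabla v)=f$ in $\mathbb{R}^n\setminus\{0\}$, satisfying: (a) $v_a(0)=0$ and $v_a(r)$ is nondecreasing in $(0,+\infty)$ for every $a\ge0$; (b) $v_a$ is unbounded in $(0,+\infty)$ for $a>0$; indeed there is a constant $c_0=c_0(n,p,L)>0$ with $v_a(r)\ge c_0\,a\,r^{\alpha}$ for $r\ge0$, where $\alpha=\frac{p-n}{p-1}$; (c) $v_0$ is bounded in $(0,+\infty)$; indeed there is a positive constant $C_0$ with $v_0(r)\le C_0$; (d) $v_a(r)\to v_0(r)$ as $a\to0$ for every $r\in(0,+\infty)$.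
   Context: A function $v\in W^{1,p}_{loc}(\Omega)$ is a weak supersolution of $-\mathrm{div}(|\nabla v|^{p-2}A(|\nabla v|)\nabla v)=f$ in an open set $\Omega$ if $\int_\Omega |\nabla v|^{p-2}A(|\nabla v|)\nabla v\cdot\nabla\eta\,dx\ge\int_\Omega f\eta\,dx$ for all nonnegative $\eta\in C_0^\infty(\Omega)$. *)

theory Defs
  imports "HOL-Analysis.Analysis"
begin

definition partial_deriv :: "'n::finite \<Rightarrow> (real^'n \<Rightarrow> real) \<Rightarrow> real^'n \<Rightarrow> real" where
  "partial_deriv i f x = frechet_derivative f (at x) (axis i 1)"

fun iter_partial :: "'n::finite list \<Rightarrow> (real^'n \<Rightarrow> real) \<Rightarrow> real^'n \<Rightarrow> real" where
  "iter_partial [] f = f"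
| "iter_partial (i # is) f = partial_deriv i (iter_partial is f)"

definition smooth :: "(real^'n::finite \<Rightarrow> real) \<Rightarrow> bool" where
  "smooth f \<longleftrightarrow> (\<forall>is. iter_partial is f differentiable_on UNIV)"

definition test_fun :: "(real^'n::finite) set \<Rightarrow> (real^'n \<Rightarrow> real) \<Rightarrow> bool" where
  "test_fun \<Omega> \<eta> \<longleftrightarrow> smooth \<eta> \<and> compact (closure {x. \<eta> x \<noteq> 0}) \<and> closure {x. \<eta> x \<noteq> 0} \<subseteq> \<Omega>"

definition loc_Lp :: "(real^'n::finite) set \<Rightarrow> real \<Rightarrow> (real^'n \<Rightarrow> real) \<Rightarrow> bool" where
  "loc_Lp \<Omega> p u \<longleftrightarrow> (\<forall>K. compact K \<and> K \<subseteq> \<Omega> \<longrightarrow>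
      set_borel_measurable lebesgue K u \<and> set_integrable lebesgue K (\<lambda>x. \<bar>u x\<bar> powr p))"

definition weak_grad_W1p_loc ::
  "(real^'n::finite) set \<Rightarrow> real \<Rightarrow> (real^'n \<Rightarrow> real) \<Rightarrow> (real^'n \<Rightarrow> real^'n) \<Rightarrow> bool" where
  "weak_grad_W1p_loc \<Omega> p v g \<longleftrightarrow> loc_Lp \<Omega> p v \<and> (\<forall>i. loc_Lp \<Omega> p (\<lambda>x. g x $ i)) \<and>
     (\<forall>\<phi> i. test_fun \<Omega> \<phi> \<longrightarrow>
        (\<integral>x. v x * partial_deriv i \<phi> x \<partial>lebesgue) = - (\<integral>x. g x $ i * \<phi> x \<partial>lebesgue))"

definition weak_supersol ::
  "(real^'n::finite) set \<Rightarrow> real \<Rightarrow> (real \<Rightarrow> real) \<Rightarrow> (real^'n \<Rightarrow> real) \<Rightarrow> (real^'n \<Rightarrow> real) \<Rightarrow> bool" where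
  "weak_supersol \<Omega> p A f v \<longleftrightarrow> (\<exists>g. weak_grad_W1p_loc \<Omega> p v g \<and>
     (\<forall>\<eta>. test_fun \<Omega> \<eta> \<and> (\<forall>x. \<eta> x \<ge> 0) \<longrightarrow>
        (\<integral>x. norm (g x) powr (p - 2) * A (norm (g x)) * (g x \<bullet> (\<chi> i. partial_deriv i \<eta> x)) \<partial>lebesgue)
          \<ge> (\<integral>x. f x * \<eta> x \<partial>lebesgue)))"

end

theory Submission
  imports Defs
begin

lemma integrable_cont_supp:
  fixes u :: "'a::euclidean_space \<Rightarrow> real"
  assumes "continuous_on UNIV u" "\<And>x. norm x > R \<Longrightarrow> u x = 0"
  shows "integrable lborel u"
proof -
  have "integrable lborel (\<lambda>x. indicator (cball 0 R) x *\<^sub>R u x)"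
    by (rule borel_integrable_compact) (auto intro: continuous_on_subset[OF assms(1)])
  moreover have "(\<lambda>x. indicator (cball 0 R) x *\<^sub>R u x) = u"
    using assms(2) by (auto simp: indicator_def fun_eq_iff not_le)
  ultimately show ?thesis by simp
qed

lemma ibp_core:
  fixes \<psi> \<psi>' :: "'a::euclidean_space \<Rightarrow> real" and e :: 'a
  assumes deriv: "\<And>x. ((\<lambda>t. \<psi> (x + t *\<^sub>R e)) has_real_derivative \<psi>' x) (at 0)"
    and cont': "continuous_on UNIV \<psi>'" and cont: "continuous_on UNIV \<psi>"
    and supp: "\<And>x. norm x > R \<Longrightarrow> \<psi> x = 0 \<and> \<psi>' x = 0"
  shows "integral\<^sup>L lborel \<psi>' = 0"
proof -
  have der: "((\<lambda>t. \<psi> (x + t *\<^sub>R e)) has_real_derivative \<psi>' (x + s *\<^sub>R e)) (at s)" for x s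
  proof -
    have "((\<lambda>t. \<psi> ((x + s *\<^sub>R e) + t *\<^sub>R e)) has_real_derivative \<psi>' (x + s *\<^sub>R e)) (at 0)"
      by (rule deriv)
    then have "((\<lambda>t. \<psi> (x + (t + s) *\<^sub>R e)) has_real_derivative \<psi>' (x + s *\<^sub>R e)) (at 0)"
      by (simp add: algebra_simps scaleR_add_left)
    then show ?thesis using DERIV_shift[of "\<lambda>t. \<psi> (x + t *\<^sub>R e)" "\<psi>' (x + s *\<^sub>R e)" 0 s]
      by simp
  qed
  obtain B where B: "\<And>x. \<bar>\<psi>' x\<bar> \<le> B"
  proof -
    have "compact (\<psi>' ` cball 0 R)"
      by (rule compact_continuous_image) (auto intro: continuous_on_subset[OF cont'])
    then obtain B where "\<And>y. y \<in> \<psi>' ` cball 0 R \<Longrightarrow> norm y \<le> B"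
      using compact_imp_bounded bounded_iff by metis
    note B = this
    have "\<bar>\<psi>' x\<bar> \<le> max B 0" for x
    proof (cases "norm x \<le> R")
      case True
      then have "\<psi>' x \<in> \<psi>' ` cball 0 R" by auto
      then show ?thesis using B by fastforce
    qed (use supp[of x] in auto)
    then show ?thesis using that by blast
  qed
  define h :: "nat \<Rightarrow> real" where "h m = 1 / (real m + 1)" for m
  have hpos: "h m > 0" for m by (simp add: h_def)
  have hle: "h m \<le> 1" for m by (simp add: h_def field_simps)
  define s where "s m x = (\<psi> (x + h m *\<^sub>R e) - \<psi> x) / h m" for m x
  have intpsi: "integrable lborel \<psi>"
    by (rule integrable_cont_supp[OF cont]) (use supp in auto)
  have cont_shift: "continuous_on UNIV (\<lambda>x. \<psi> (x + c))" for c
    by (rule continuous_on_compose2[OF cont]) (auto intro: continuous_intros)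
  have shift_int: "integrable lborel (\<lambda>x. \<psi> (x + c))" 
    and shift_eq: "integral\<^sup>L lborel (\<lambda>x. \<psi> (x + c)) = integral\<^sup>L lborel \<psi>" for c
  proof -
    have m: "\<psi> \<in> borel_measurable borel" by (rule borel_measurable_continuous_onI[OF cont])
    have "integral\<^sup>L lborel \<psi> = integral\<^sup>L (distr lborel borel ((+) c)) \<psi>"
      by (simp add: lborel_distr_plus)
    also have "\<dots> = integral\<^sup>L lborel (\<lambda>x. \<psi> (c + x))"
      by (rule integral_distr) (auto simp: m)
    finally show "integral\<^sup>L lborel (\<lambda>x. \<psi> (x + c)) = integral\<^sup>L lborel \<psi>"
      by (simp add: add.commute)
    have "integrable (distr lborel borel ((+) c)) \<psi>" using intpsi by (simp add: lborel_distr_plus)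
    then have "integrable lborel (\<lambda>x. \<psi> (c + x))"
      by (subst (asm) integrable_distr_eq) (auto simp: m)
    then show "integrable lborel (\<lambda>x. \<psi> (x + c))" by (simp add: add.commute)
  qed
  have s0: "integral\<^sup>L lborel (s m) = 0" for m
  proof -
    have "integral\<^sup>L lborel (s m) = (integral\<^sup>L lborel (\<lambda>x. \<psi> (x + h m *\<^sub>R e)) - integral\<^sup>L lborel \<psi>) / h m"
      unfolding s_def using shift_int intpsi by simp
    then show ?thesis using shift_eq by simp
  qed
  have sm: "s m \<in> borel_measurable lborel" for m
    unfolding s_def measurable_lborel2 using hpos[of m]
    by (intro borel_measurable_continuous_onI continuous_intros cont_shift cont) auto
  have lim: "(\<lambda>m. s m x) \<longlonglongrightarrow> \<psi>' x" for x
  proof -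
    have "((\<lambda>t. (\<psi> (x + t *\<^sub>R e) - \<psi> (x + 0 *\<^sub>R e)) / t) \<longlongrightarrow> \<psi>' x) (at 0)"
      using deriv[of x] unfolding has_field_derivative_iff by simp
    moreover have "filterlim h (at 0) sequentially"
    proof (rule filterlim_atI)
      show "h \<longlonglongrightarrow> 0" unfolding h_def
        using LIMSEQ_inverse_real_of_nat by (simp add: divide_inverse add.commute)
      show "\<forall>\<^sub>F m in sequentially. h m \<noteq> 0" using hpos by (simp add: dual_order.strict_implies_not_eq)
    qed
    ultimately show ?thesis using filterlim_compose by (simp add: s_def) (fastforce)
  qed
  have bound: "norm (s m x) \<le> B * indicator (cball 0 (R + norm e)) x" for m x
  proof (cases "norm x \<le> R + norm e")
    case True
    obtain z where "0 < z" "z < h m" "\<psi> (x + h m *\<^sub>R e) - \<psi> (x + 0 *\<^sub>R e) = (h m - 0) * \<psi>' (x + z *\<^sub>R e)"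
      using MVT2[of 0 "h m" "\<lambda>t. \<psi> (x + t *\<^sub>R e)" "\<lambda>t. \<psi>' (x + t *\<^sub>R e)"] der hpos[of m] by blast
    then have "s m x = \<psi>' (x + z *\<^sub>R e)" using hpos[of m] by (simp add: s_def)
    then show ?thesis using B[of "x + z *\<^sub>R e"] True by (simp add: indicator_def)
  next
    case False
    have "norm (x + h m *\<^sub>R e) \<ge> norm x - h m * norm e"
      using norm_triangle_ineq2[of x "- h m *\<^sub>R e"] hpos[of m] by simp
    moreover have "h m * norm e \<le> norm e" using hle[of m] mult_right_mono[of "h m" 1 "norm e"] by simp
    ultimately have "norm (x + h m *\<^sub>R e) > R" using False by linarith
    then show ?thesis using False supp[of x] supp[of "x + h m *\<^sub>R e"] norm_ge_zero[of e] by (simp add: s_def)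
  qed
  have wint: "integrable lborel (\<lambda>x. B * indicator (cball 0 (R + norm e)) x)"
    using borel_integrable_compact[of "cball 0 (R + norm e)" "\<lambda>_. B"] by (simp add: mult.commute)
  have "(\<lambda>m. integral\<^sup>L lborel (s m)) \<longlonglongrightarrow> integral\<^sup>L lborel \<psi>'"
    by (rule integral_dominated_convergence[OF _ sm wint])
       (use bound[simplified] in \<open>auto intro: borel_measurable_continuous_onI[OF cont'] lim\<close>)
  then show ?thesis using s0 LIMSEQ_unique by (simp add: LIMSEQ_const_iff)
qed

lemma cont_ext0:
  fixes F :: "'a::euclidean_space \<Rightarrow> real"
  assumes "open U" "compact C" "C \<subseteq> U" "continuous_on U F" "\<And>x. x \<in> U \<Longrightarrow> x \<notin> C \<Longrightarrow> F x = 0"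
  shows "continuous_on UNIV (\<lambda>x. if x \<in> U then F x else 0)"
proof -
  have "continuous_on (U \<union> (- C)) (\<lambda>x. if x \<in> U then F x else 0)"
  proof (rule continuous_on_open_Un)
    show "open U" by fact
    show "open (- C)" using assms(2) by (simp add: compact_imp_closed open_Compl)
    show "continuous_on U (\<lambda>x. if x \<in> U then F x else 0)"
      using assms(4) by (rule continuous_on_eq) auto
    show "continuous_on (- C) (\<lambda>x. if x \<in> U then F x else 0)"
      by (rule continuous_on_eq[OF continuous_on_const[of _ 0]]) (use assms(5) in auto)
  qed
  moreover have "U \<union> (- C) = UNIV" using assms(3) by auto
  ultimately show ?thesis by simp
qed

lemma deriv_zero_outside:
  fixes \<phi> \<phi>' :: "'a::euclidean_space \<Rightarrow> real"
  assumes "closed C" "\<And>x. x \<notin> C \<Longrightarrow> \<phi> x = 0" "x \<notin> C"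
  shows "((\<lambda>t. \<phi> (x + t *\<^sub>R e)) has_real_derivative 0) (at 0)"
proof -
  have "open ((\<lambda>t::real. x + t *\<^sub>R e) -` (- C))"
    by (rule open_vimage) (use assms(1) in \<open>auto intro!: continuous_intros\<close>)
  then show ?thesis
    by (rule has_field_derivative_transform_within_open[OF DERIV_const[where k=0]])
       (use assms in auto)
qed

lemma ibp_open:
  fixes u u' \<phi> \<phi>' :: "'a::euclidean_space \<Rightarrow> real" and e :: 'a
  assumes U: "open U"
    and du: "\<And>x. x \<in> U \<Longrightarrow> ((\<lambda>t. u (x + t *\<^sub>R e)) has_real_derivative u' x) (at 0)"
    and cu: "continuous_on U u" and cu': "continuous_on U u'"
    and dphi: "\<And>x. ((\<lambda>t. \<phi> (x + t *\<^sub>R e)) has_real_derivative \<phi>' x) (at 0)"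
    and cphi: "continuous_on UNIV \<phi>" and cphi': "continuous_on UNIV \<phi>'"
    and C: "compact C" "C \<subseteq> U" "\<And>x. x \<notin> C \<Longrightarrow> \<phi> x = 0"
  shows "integrable lebesgue (\<lambda>x. u x * \<phi>' x)" "integrable lebesgue (\<lambda>x. u' x * \<phi> x)"
    "(\<integral>x. u x * \<phi>' x \<partial>lebesgue) = - (\<integral>x. u' x * \<phi> x \<partial>lebesgue)"
proof -
  have clC: "closed C" using C(1) by (rule compact_imp_closed)
  have phi'0: "\<phi>' x = 0" if "x \<notin> C" for x
    using DERIV_unique[OF dphi[of x] deriv_zero_outside[OF clC C(3) that]] .
  obtain R where R: "C \<subseteq> cball 0 R"
  proof -
    obtain a where "\<forall>x\<in>C. norm x \<le> a" using compact_imp_bounded[OF C(1)] unfolding bounded_iff by blast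
    then have "C \<subseteq> cball 0 a" by (auto simp: subset_eq)
    then show ?thesis using that by blast
  qed
  define a where "a x = (if x \<in> U then u x * \<phi>' x else 0)" for x
  define b where "b x = (if x \<in> U then u' x * \<phi> x else 0)" for x
  define \<psi> where "\<psi> x = (if x \<in> U then u x * \<phi> x else 0)" for x
  have a_eq: "a = (\<lambda>x. u x * \<phi>' x)" using phi'0 C(2) by (auto simp: a_def fun_eq_iff)
  have b_eq: "b = (\<lambda>x. u' x * \<phi> x)" using C by (auto simp: b_def fun_eq_iff)
  have ca: "continuous_on UNIV a" unfolding a_def
    by (rule cont_ext0[OF U C(1,2)]) (use phi'0 in \<open>auto intro!: continuous_intros cu continuous_on_subset[OF cphi']\<close>)
  have cb: "continuous_on UNIV b" unfolding b_def
    by (rule cont_ext0[OF U C(1,2)]) (use C(3) in \<open>auto intro!: continuous_intros cu' continuous_on_subset[OF cphi]\<close>)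
  have cpsi: "continuous_on UNIV \<psi>" unfolding \<psi>_def
    by (rule cont_ext0[OF U C(1,2)]) (use C(3) in \<open>auto intro!: continuous_intros cu continuous_on_subset[OF cphi]\<close>)
  have out: "norm x > R \<Longrightarrow> x \<notin> C" for x using R by auto
  have ia: "integrable lborel a"
    by (rule integrable_cont_supp[OF ca, of R]) (use out phi'0 in \<open>auto simp: a_def\<close>)
  have ib: "integrable lborel b"
    by (rule integrable_cont_supp[OF cb, of R]) (use out C(3) in \<open>auto simp: b_def\<close>)
  have dpsi: "((\<lambda>t. \<psi> (x + t *\<^sub>R e)) has_real_derivative (b x + a x)) (at 0)" for x
  proof (cases "x \<in> U")
    case True
    have "open ((\<lambda>t::real. x + t *\<^sub>R e) -` U)"
      by (rule open_vimage[OF U]) (auto intro!: continuous_intros)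
    moreover have "((\<lambda>t. u (x + t *\<^sub>R e) * \<phi> (x + t *\<^sub>R e)) has_real_derivative (b x + a x)) (at 0)"
      using DERIV_mult[OF du[OF True] dphi[of x]] True by (simp add: a_def b_def algebra_simps)
    ultimately show ?thesis
      using has_field_derivative_transform_within_open[of "\<lambda>t. u (x + t *\<^sub>R e) * \<phi> (x + t *\<^sub>R e)" "b x + a x" 0
          "(\<lambda>t. x + t *\<^sub>R e) -` U" "\<lambda>t. \<psi> (x + t *\<^sub>R e)"] True
      by (auto simp: \<psi>_def)
  next
    case False
    then have "x \<notin> C" using C(2) by auto
    have "((\<lambda>t. \<psi> (x + t *\<^sub>R e)) has_real_derivative 0) (at 0)"
      by (rule deriv_zero_outside[OF clC _ \<open>x \<notin> C\<close>]) (use C(3) in \<open>auto simp: \<psi>_def\<close>)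
    then show ?thesis using False by (simp add: a_def b_def)
  qed
  have "integral\<^sup>L lborel (\<lambda>x. b x + a x) = 0"
    by (rule ibp_core[OF dpsi _ cpsi, of R]) 
       (use out C(3) phi'0 cb ca in \<open>auto simp: \<psi>_def a_def b_def intro: continuous_on_add\<close>)
  then have eq: "integral\<^sup>L lborel a = - integral\<^sup>L lborel b"
    using ia ib by simp
  have ma: "a \<in> borel_measurable lborel" using ia by (rule borel_measurable_integrable)
  have mb: "b \<in> borel_measurable lborel" using ib by (rule borel_measurable_integrable)
  show "integrable lebesgue (\<lambda>x. u x * \<phi>' x)"
    using ia ma by (simp add: a_eq integrable_completion)
  show "integrable lebesgue (\<lambda>x. u' x * \<phi> x)"
    using ib mb by (simp add: b_eq integrable_completion)
  show "(\<integral>x. u x * \<phi>' x \<partial>lebesgue) = - (\<integral>x. u' x * \<phi> x \<partial>lebesgue)"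
    using eq ma mb by (simp add: a_eq b_eq integral_completion)
qed

locale hyp =
  fixes p \<delta> L :: real and A :: "real \<Rightarrow> real"
  assumes p1: "p > 1" and dpos: "\<delta> > 0"
    and AL: "\<forall>t\<ge>0. \<delta> \<le> A t \<and> A t \<le> L"
    and Acont: "continuous_on {0..} A"
    and hmono: "strict_mono_on {0<..} (\<lambda>t. t powr (p - 1) * A t)"

context hyp begin

definition hh :: "real \<Rightarrow> real" where "hh t = t powr (p - 1) * A t"
definition kinv :: "real \<Rightarrow> real" where "kinv y = (SOME t. t > 0 \<and> hh t = y)"

lemma hh_bounds: "t > 0 \<Longrightarrow> \<delta> * t powr (p - 1) \<le> hh t \<and> hh t \<le> L * t powr (p - 1)"
  using AL unfolding hh_def by (auto intro: mult_left_mono simp: mult.commute)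

lemma hh_less: "0 < s \<Longrightarrow> s < t \<Longrightarrow> hh s < hh t"
  using hmono unfolding hh_def strict_mono_on_def by auto

lemma hh_cont: "continuous_on {0<..} hh"
proof -
  have "continuous_on {0<..} A" using Acont by (rule continuous_on_subset) auto
  then show ?thesis unfolding hh_def by (auto intro!: continuous_intros)
qed

lemma powr_inv_pow: "y > 0 \<Longrightarrow> (y powr (1 / (p - 1))) powr (p - 1) = y"
  using p1 by (simp add: powr_powr)

lemma kinv_ex: assumes "y > 0" shows "\<exists>t. t > 0 \<and> hh t = y"
proof -
  have Lpos: "L > 0" using AL dpos by (metis dual_order.strict_trans1 order.refl)
  define t1 where "t1 = (y / (2 * L)) powr (1 / (p - 1))"
  define t2 where "t2 = (2 * y / \<delta>) powr (1 / (p - 1))"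
  have t1: "t1 > 0" and t2: "t2 > 0" using assms Lpos dpos by (auto simp: t1_def t2_def)
  have "hh t1 \<le> L * (y / (2 * L))" using hh_bounds[OF t1] powr_inv_pow[of "y / (2 * L)"] assms Lpos
    by (simp add: t1_def)
  also have "\<dots> < y" using Lpos assms by simp
  finally have h1: "hh t1 < y" .
  have "y < \<delta> * (2 * y / \<delta>)" using dpos assms by simp
  also have "\<dots> \<le> hh t2" using hh_bounds[OF t2] powr_inv_pow[of "2 * y / \<delta>"] assms dpos
    by (simp add: t2_def)
  finally have h2: "y < hh t2" .
  have "t1 \<le> t2"
  proof (rule ccontr)
    assume "\<not> t1 \<le> t2" then have "hh t2 < hh t1" using hh_less t2 by simp
    then show False using h1 h2 by simp
  qed
  moreover have "continuous_on {t1..t2} hh"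
    by (rule continuous_on_subset[OF hh_cont]) (use t1 in auto)
  ultimately obtain t where "t1 \<le> t" "t \<le> t2" "hh t = y"
    using IVT'[of hh t1 y t2] h1 h2 by auto
  then show ?thesis using t1 by (intro exI[of _ t]) auto
qed

lemma kinv: "y > 0 \<Longrightarrow> kinv y > 0 \<and> hh (kinv y) = y"
  unfolding kinv_def by (rule someI_ex[OF kinv_ex])

lemma kinv_unique: "t > 0 \<Longrightarrow> kinv (hh t) = t"
proof -
  assume t: "t > 0"
  have hpos: "hh t > 0" using hh_bounds[OF t] dpos t
    by (smt (verit) mult_pos_pos powr_gt_zero)
  have k: "kinv (hh t) > 0" "hh (kinv (hh t)) = hh t" using kinv[OF hpos] by auto
  show ?thesis
  proof (rule ccontr)
    assume "kinv (hh t) \<noteq> t"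
    then consider "kinv (hh t) < t" | "kinv (hh t) > t" by linarith
    then show False using hh_less k t by cases (metis less_irrefl)+
  qed
qed

lemma kinv_mono: "0 < y1 \<Longrightarrow> y1 \<le> y2 \<Longrightarrow> kinv y1 \<le> kinv y2"
proof (rule ccontr)
  assume a: "0 < y1" "y1 \<le> y2" "\<not> kinv y1 \<le> kinv y2"
  have "hh (kinv y2) < hh (kinv y1)" using a kinv[of y2] by (intro hh_less) auto
  then show False using kinv[of y1] kinv[of y2] a by auto
qed

lemma kinv_lower: assumes "y > 0" shows "(y / L) powr (1 / (p - 1)) \<le> kinv y"
proof (rule ccontr)
  have Lpos: "L > 0" using AL dpos by (metis dual_order.strict_trans1 order.refl)
  define t0 where "t0 = (y / L) powr (1 / (p - 1))"
  have t0: "t0 > 0" using assms Lpos by (simp add: t0_def)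
  assume "\<not> (y / L) powr (1 / (p - 1)) \<le> kinv y"
  then have "hh (kinv y) < hh t0" using kinv[OF assms] by (intro hh_less) (auto simp: t0_def)
  also have "hh t0 \<le> L * (y / L)" using hh_bounds[OF t0] powr_inv_pow[of "y / L"] assms Lpos
    by (simp add: t0_def)
  finally show False using kinv[OF assms] Lpos by simp
qed

lemma kinv_upper: assumes "y > 0" shows "kinv y \<le> (y / \<delta>) powr (1 / (p - 1))"
proof (rule ccontr)
  define t0 where "t0 = (y / \<delta>) powr (1 / (p - 1))"
  have t0: "t0 > 0" using assms dpos by (simp add: t0_def)
  assume "\<not> kinv y \<le> (y / \<delta>) powr (1 / (p - 1))"
  then have "hh t0 < hh (kinv y)" using t0 by (intro hh_less) (auto simp: t0_def)
  moreover have "\<delta> * (y / \<delta>) \<le> hh t0" using hh_bounds[OF t0] powr_inv_pow[of "y / \<delta>"] assms dpos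
    by (simp add: t0_def)
  ultimately show False using kinv[OF assms] dpos by simp
qed

lemma kinv_cont: assumes "y > 0" shows "isCont kinv y"
proof -
  define x where "x = kinv y"
  have x: "x > 0" "hh x = y" using kinv[OF assms] by (auto simp: x_def)
  have "isCont kinv (hh x)"
  proof (rule isCont_inverse_function[where d = "x / 2" and f = hh and g = kinv])
    show "0 < x / 2" using x by simp
    fix z assume "\<bar>z - x\<bar> \<le> x / 2"
    then have z: "z > 0" using x by linarith
    then show "kinv (hh z) = z" by (rule kinv_unique)
    show "isCont hh z"
      by (rule continuous_on_interior[OF hh_cont]) (use z in \<open>auto simp: interior_open\<close>)
  qed
  then show ?thesis using x by simp
qed

end

lemma pw_helper: "c \<ge> 0 \<Longrightarrow> s > 0 \<Longrightarrow> (c * s powr e) powr q = c powr q * s powr (e * q)"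
  for c s e q :: real
  by (simp add: powr_mult powr_powr)

locale rad = hyp +
  fixes n K \<beta> :: real
  assumes n1: "1 \<le> n" and np: "n < p" and Kpos: "K > 0" and bpos: "\<beta> > 0"
    and bbig: "p - n < 2 * \<beta>"
begin

definition "gam = (n - 1) / (p - 1)"
definition "Phi a s = L * a powr (p - 1) + K * (1 + s\<^sup>2) powr (- \<beta>)"
definition "ww a s = (if s > 0 then kinv (Phi a s / s powr (n - 1)) else 0)"
definition "VV a r = integral {0..r} (ww a)"

lemma Lpos: "L > 0" using AL dpos by (metis dual_order.strict_trans1 order.refl)
lemma gam: "0 \<le> gam" "gam < 1" using n1 np p1 by (auto simp: gam_def)

lemma sq1: "(1 + s\<^sup>2::real) > 0" by (simp add: add_pos_nonneg)

lemma Phi_pos: "a \<ge> 0 \<Longrightarrow> Phi a s > 0"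
  using sq1[of s] unfolding Phi_def using Lpos Kpos by (intro add_nonneg_pos mult_nonneg_nonneg mult_pos_pos) auto

lemma Phi_le: "a \<ge> 0 \<Longrightarrow> Phi a s \<le> L * a powr (p - 1) + K"
proof -
  have "1 \<le> (1 + s\<^sup>2) powr \<beta>" using bpos by (intro ge_one_powr_ge_zero) auto
  then have "(1 + s\<^sup>2) powr (- \<beta>) \<le> 1" by (simp add: powr_minus_divide divide_le_eq_1)
  then show ?thesis unfolding Phi_def using Kpos by simp
qed

lemma Phi_ge: "L * a powr (p - 1) \<le> Phi a s"
  unfolding Phi_def using Kpos by simp

lemma arg_pos: "a \<ge> 0 \<Longrightarrow> s > 0 \<Longrightarrow> Phi a s / s powr (n - 1) > 0"
  using Phi_pos by simp

lemma ww_pos: "a \<ge> 0 \<Longrightarrow> s > 0 \<Longrightarrow> ww a s > 0"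
  unfolding ww_def using kinv[OF arg_pos] by simp

lemma ww_nonneg: "a \<ge> 0 \<Longrightarrow> ww a s \<ge> 0"
  using ww_pos[of a s] by (cases "s > 0") (auto simp: ww_def)

lemma div_powr: "s > 0 \<Longrightarrow> x / s powr (n - 1) = x * s powr (- (n - 1))"
  using powr_minus_divide[of s "n - 1"] by (simp add: divide_inverse)

lemma eqg: "(1 - n) / (p - 1) = - gam" "- ((n - 1) / (p - 1)) = - gam" "(1 - n) * (1 / (p - 1)) = - gam"
  "- (n - 1) * (1 / (p - 1)) = - gam"
  using p1 by (auto simp: gam_def field_simps)

lemma ww_lower: assumes "a \<ge> 0" "s > 0" shows "a * s powr (- gam) \<le> ww a s"
proof -
  define y where "y = Phi a s / s powr (n - 1)"
  have y: "y > 0" using arg_pos assms by (simp add: y_def)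
  have "(a powr (p - 1) * s powr (- (n - 1))) powr (1 / (p - 1)) \<le> (y / L) powr (1 / (p - 1))"
    using Phi_ge[of a s] assms Lpos p1
    by (intro powr_mono2) (auto simp: y_def div_powr field_simps)
  also have "\<dots> \<le> kinv y" by (rule kinv_lower[OF y])
  finally have "(a powr (p - 1) * s powr (- (n - 1))) powr (1 / (p - 1)) \<le> ww a s"
    using assms by (simp add: ww_def y_def)
  moreover have "(a powr (p - 1) * s powr (- (n - 1))) powr (1 / (p - 1)) = a * s powr (- gam)"
    using assms p1 by (subst pw_helper) (auto simp: powr_powr eqg)
  ultimately show ?thesis by simp
qed

lemma ww_upper: assumes "a \<ge> 0" "s > 0"
  shows "ww a s \<le> ((L * a powr (p - 1) + K) / \<delta>) powr (1 / (p - 1)) * s powr (- gam)"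
proof -
  define y where "y = Phi a s / s powr (n - 1)"
  have y: "y > 0" using arg_pos assms by (simp add: y_def)
  have "ww a s = kinv y" using assms by (simp add: ww_def y_def)
  also have "\<dots> \<le> (y / \<delta>) powr (1 / (p - 1))" by (rule kinv_upper[OF y])
  also have "\<dots> \<le> ((L * a powr (p - 1) + K) / \<delta> * s powr (- (n - 1))) powr (1 / (p - 1))"
  proof (rule powr_mono2)
    have "y = Phi a s * s powr (- (n - 1))" using assms by (simp add: y_def div_powr)
    also have "\<dots> \<le> (L * a powr (p - 1) + K) * s powr (- (n - 1))"
      by (rule mult_right_mono[OF Phi_le[OF assms(1)]]) simp
    finally show "y / \<delta> \<le> (L * a powr (p - 1) + K) / \<delta> * s powr (- (n - 1))"
      using dpos by (simp add: divide_right_mono)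
  qed (use y dpos p1 in auto)
  also have "\<dots> = ((L * a powr (p - 1) + K) / \<delta>) powr (1 / (p - 1)) * s powr (- gam)"
    using assms p1 Lpos Kpos dpos by (subst pw_helper) (auto simp: eqg)
  finally show ?thesis .
qed

lemma ww0_upper_inf: assumes "s \<ge> 1"
  shows "ww 0 s \<le> (K / \<delta>) powr (1 / (p - 1)) * s powr (- (2 * \<beta> + n - 1) / (p - 1))"
proof -
  have s: "s > 0" using assms by simp
  define y where "y = Phi 0 s / s powr (n - 1)"
  have y: "y > 0" using arg_pos s by (simp add: y_def)
  have "(1 + s\<^sup>2) powr (- \<beta>) \<le> (s\<^sup>2) powr (- \<beta>)"
    using s bpos by (intro powr_mono2') auto
  also have "(s\<^sup>2) powr (- \<beta>) = s powr (- 2 * \<beta>)"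
  proof -
    have "s\<^sup>2 = s powr 2" using powr_realpow[of s 2] s by simp
    then show ?thesis by (simp add: powr_powr)
  qed
  finally have Ph: "Phi 0 s \<le> K * s powr (- 2 * \<beta>)" using Kpos p1 by (simp add: Phi_def)
  have "ww 0 s = kinv y" using s by (simp add: ww_def y_def)
  also have "\<dots> \<le> (y / \<delta>) powr (1 / (p - 1))" by (rule kinv_upper[OF y])
  also have "\<dots> \<le> (K / \<delta> * s powr (- (2 * \<beta> + n - 1))) powr (1 / (p - 1))"
  proof (rule powr_mono2)
    have "y \<le> K * s powr (- 2 * \<beta>) * s powr (- (n - 1))"
      using Ph s by (simp add: y_def div_powr)
    also have "\<dots> = K * s powr (- (2 * \<beta> + n - 1))"
      by (simp add: powr_add[symmetric] algebra_simps)
    finally show "y / \<delta> \<le> K / \<delta> * s powr (- (2 * \<beta> + n - 1))"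
      using dpos by (simp add: field_simps)
  qed (use y dpos p1 in auto)
  also have "\<dots> = (K / \<delta>) powr (1 / (p - 1)) * s powr (- (2 * \<beta> + n - 1) / (p - 1))"
    using s p1 Kpos dpos by (subst pw_helper) auto
  finally show ?thesis .
qed

lemma ww_mono: assumes "0 \<le> a" "a \<le> a'" shows "ww a s \<le> ww a' s"
proof (cases "s > 0")
  case True
  have "Phi a s \<le> Phi a' s"
    using assms p1 Lpos by (auto simp: Phi_def intro!: powr_mono2)
  then have "Phi a s / s powr (n - 1) \<le> Phi a' s / s powr (n - 1)"
    using True by (simp add: divide_right_mono)
  then show ?thesis using True assms by (auto simp: ww_def intro!: kinv_mono arg_pos)
qed (simp add: ww_def)

lemma arg_cont: "0 < s \<Longrightarrow> isCont (\<lambda>s. Phi a s / s powr (n - 1)) s"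
  using sq1[of s] unfolding Phi_def by (auto intro!: continuous_intros)

lemma ww_cont: assumes "a \<ge> 0" "s > 0" shows "isCont (ww a) s"
proof -
  have "isCont (\<lambda>s. kinv (Phi a s / s powr (n - 1))) s"
    by (rule isCont_o2[OF arg_cont[OF assms(2)] kinv_cont[OF arg_pos[OF assms]]])
  moreover have "eventually (\<lambda>x. ww a x = kinv (Phi a x / x powr (n - 1))) (nhds s)"
    using eventually_nhds_in_open[of "{0<..}" s] assms by (auto simp: ww_def elim!: eventually_mono)
  ultimately show ?thesis using isCont_cong[of "ww a" "\<lambda>x. kinv (Phi a x / x powr (n - 1))" s] by blast
qed

lemma ww_lim: assumes "s > 0" "X \<longlonglongrightarrow> 0" "\<And>m. X m \<ge> 0"
  shows "(\<lambda>m. ww (X m) s) \<longlonglongrightarrow> ww 0 s"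
proof -
  have X0: "(\<lambda>m. X m powr (p - 1)) \<longlonglongrightarrow> 0"
    using assms p1 by (intro tendsto_zero_powrI[OF assms(2) tendsto_const]) auto
  then have "(\<lambda>m. Phi (X m) s / s powr (n - 1)) \<longlonglongrightarrow> Phi 0 s / s powr (n - 1)"
  proof -
    have "(\<lambda>m. L * X m powr (p - 1) + K * (1 + s\<^sup>2) powr (- \<beta>)) \<longlonglongrightarrow> L * 0 + K * (1 + s\<^sup>2) powr (- \<beta>)"
      by (intro tendsto_intros X0)
    then show ?thesis unfolding Phi_def using assms(1) by (intro tendsto_divide tendsto_const) auto
  qed
  moreover have "isCont kinv (Phi 0 s / s powr (n - 1))"
    using kinv_cont arg_pos assms by simp
  ultimately have "(\<lambda>m. kinv (Phi (X m) s / s powr (n - 1))) \<longlonglongrightarrow> kinv (Phi 0 s / s powr (n - 1))"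
    using isCont_tendsto_compose by blast
  then show ?thesis using assms by (simp add: ww_def)
qed

lemma powr_int: "(\<lambda>s. c * s powr (- gam)) integrable_on {0..r}" if "r \<ge> 0"
  using integrable_on_powr_from_0[of "- gam" r] gam that by (auto intro: integrable_on_mult_right)

lemma ww_int: assumes "a \<ge> 0" shows "ww a integrable_on {0..r}"
proof (cases "r \<ge> 0")
  case True
  define C where "C = ((L * a powr (p - 1) + K) / \<delta>) powr (1 / (p - 1))"
  have "ww a absolutely_integrable_on {0<..r}"
  proof (rule measurable_bounded_by_integrable_imp_absolutely_integrable)
    show "ww a \<in> borel_measurable (lebesgue_on {0<..r})"
      by (rule continuous_imp_measurable_on_sets_lebesgue)
         (auto intro!: continuous_at_imp_continuous_on ww_cont assms)
    show "{0<..r} \<in> sets lebesgue" by simp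
    have "(\<lambda>s. C * s powr (- gam)) integrable_on {0..r}" by (rule powr_int[OF True])
    moreover have "{0..r} = insert 0 {0<..r}" using True by auto
    ultimately show "(\<lambda>s. C * s powr (- gam)) integrable_on {0<..r}"
      by (metis integrable_on_insert_iff)
    show "norm (ww a x) \<le> C * x powr (- gam)" if "x \<in> {0<..r}" for x
      using ww_upper[of a x] ww_nonneg[of a x] assms that by (simp add: C_def)
  qed
  then have "ww a integrable_on {0<..r}" by (simp add: absolutely_integrable_on_def)
  moreover have "{0..r} = insert 0 {0<..r}" using True by auto
  ultimately show ?thesis by (metis integrable_on_insert_iff)
qed auto

lemma VV_zero: "VV a 0 = 0" by (simp add: VV_def)

lemma VV_deriv: assumes "a \<ge> 0" "r > 0" shows "(VV a has_real_derivative ww a r) (at r)"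
proof -
  have int: "ww a integrable_on {0..2*r}" by (rule ww_int[OF assms(1)])
  have mem: "r \<in> {0..2*r} - {}" using assms by simp
  have cont: "continuous (at r within ({0..2*r} - {})) (ww a)"
    by (rule continuous_at_imp_continuous_at_within[OF ww_cont[OF assms]])
  have D: "((\<lambda>u. integral {0..u} (ww a)) has_vector_derivative ww a r) (at r within ({0..2*r} - {}))"
    by (rule integral_has_vector_derivative_continuous_at[OF int mem finite.emptyI cont])
  have eq: "at r within ({0..2*r} - {}) = at r"
    by (rule at_within_interior) (use assms in \<open>simp add: interior_atLeastAtMost_real\<close>)
  have VVeq: "VV a = (\<lambda>u. integral {0..u} (ww a))" by (simp add: VV_def fun_eq_iff)
  show ?thesis using D unfolding eq VVeq has_real_derivative_iff_has_vector_derivative .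
qed

lemma VV_mono: assumes "a \<ge> 0" "0 \<le> r" "r \<le> r'" shows "VV a r \<le> VV a r'"
  unfolding VV_def
  by (rule integral_subset_le) (use assms in \<open>auto intro: ww_int ww_nonneg\<close>)

lemma VV_nonneg: assumes "a \<ge> 0" shows "VV a r \<ge> 0"
  unfolding VV_def by (rule integral_nonneg[OF ww_int[OF assms]]) (use ww_nonneg assms in auto)

lemma VV_lower: assumes "a \<ge> 0" "r \<ge> 0" shows "a * r powr (1 - gam) / (1 - gam) \<le> VV a r"
proof -
  have "((\<lambda>s. a * s powr (- gam)) has_integral (a * (r powr (- gam + 1) / (- gam + 1)))) {0..r}"
    using has_integral_powr_from_0[of "- gam" r] gam assms by (intro has_integral_mult_right) auto
  moreover have "(ww a has_integral VV a r) {0..r}"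
    unfolding VV_def using ww_int[OF assms(1)] by (rule integrable_integral)
  ultimately have "a * (r powr (- gam + 1) / (- gam + 1)) \<le> VV a r"
    by (rule has_integral_le) (use assms ww_lower ww_nonneg in \<open>force simp: le_less\<close>)
  then show ?thesis by (simp add: add.commute)
qed

end

context rad begin

definition "mu = (2 * \<beta> + n - 1) / (p - 1) - 1"
lemma mu_pos: "mu > 0"
proof -
  have "p - 1 < 2 * \<beta> + n - 1" using bbig by simp
  then have "1 < (2 * \<beta> + n - 1) / (p - 1)" using p1 by (simp add: less_divide_eq_1_pos)
  then show ?thesis by (simp add: mu_def)
qed

lemma VV0_bound: assumes "r \<ge> 0"
  shows "VV 0 r \<le> (K / \<delta>) powr (1 / (p - 1)) * (1 / (1 - gam) + 1 / mu)"
proof -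
  define C where "C = (K / \<delta>) powr (1 / (p - 1))"
  have C: "C \<ge> 0" by (simp add: C_def)
  have small: "integral {0..t} (ww 0) \<le> C / (1 - gam)" if "0 \<le> t" "t \<le> 1" for t
  proof -
    have I1: "((\<lambda>s. C * s powr (- gam)) has_integral (C * (t powr (- gam + 1) / (- gam + 1)))) {0..t}"
      using has_integral_powr_from_0[of "- gam" t] gam that by (intro has_integral_mult_right) auto
    have I2: "(ww 0 has_integral integral {0..t} (ww 0)) {0..t}"
      using ww_int[of 0] by (intro integrable_integral) auto
    have le: "ww 0 x \<le> C * x powr (- gam)" if "x \<in> {0..t}" for x
    proof (cases "x > 0")
      case True then show ?thesis using ww_upper[of 0 x] by (simp add: C_def)
    next
      case False then have "x = 0" using that by simp
      then show ?thesis by (simp add: ww_def)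
    qed
    have "integral {0..t} (ww 0) \<le> C * (t powr (- gam + 1) / (- gam + 1))"
      by (rule has_integral_le[OF I2 I1 le])
    also have "\<dots> \<le> C * (1 / (1 - gam))"
    proof (rule mult_left_mono[OF _ C])
      have "t powr (1 - gam) \<le> 1 powr (1 - gam)" using that gam by (intro powr_mono2) auto
      then show "t powr (- gam + 1) / (- gam + 1) \<le> 1 / (1 - gam)"
        using gam by (simp add: divide_right_mono add.commute)
    qed
    finally show ?thesis by simp
  qed
  show ?thesis
  proof (cases "r \<le> 1")
    case True
    then have "VV 0 r \<le> C / (1 - gam)" using small assms by (simp add: VV_def)
    also have "\<dots> \<le> C * (1 / (1 - gam) + 1 / mu)" using C mu_pos by (simp add: field_simps)
    finally show ?thesis by (simp add: C_def)
  next
    case False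
    have int: "ww 0 integrable_on {0..r}" by (rule ww_int) simp
    have "VV 0 r = integral {0..1} (ww 0) + integral {1..r} (ww 0)"
    proof -
      have "integral {0..1} (ww 0) + integral {1..r} (ww 0) = integral {0..r} (ww 0)"
        by (rule Henstock_Kurzweil_Integration.integral_combine) (use False int in auto)
      then show ?thesis by (simp add: VV_def)
    qed
    also have "integral {1..r} (ww 0) \<le> C / mu"
    proof -
      have "integral {1..r} (ww 0) \<le> integral {1..r} (\<lambda>s. C * s powr (- (2 * \<beta> + n - 1) / (p - 1)))"
      proof (rule integral_le)
        show "ww 0 integrable_on {1..r}" by (rule integrable_subinterval_real[OF int]) auto
        show "(\<lambda>s. C * s powr (- (2 * \<beta> + n - 1) / (p - 1))) integrable_on {1..r}"
          by (intro integrable_continuous_interval continuous_intros) auto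
      qed (use ww0_upper_inf in \<open>auto simp: C_def\<close>)
      also have "\<dots> \<le> integral {1..} (\<lambda>s. C * s powr (- (2 * \<beta> + n - 1) / (p - 1)))"
      proof (rule integral_subset_le)
        have e: "- (2 * \<beta> + n - 1) / (p - 1) < - 1" using mu_pos p1 by (simp add: mu_def field_simps)
        show "(\<lambda>s. C * s powr (- (2 * \<beta> + n - 1) / (p - 1))) integrable_on {1..}"
          using has_integral_powr_to_inf[OF e, of 1] by (intro integrable_on_mult_right) (auto simp: integrable_on_def)
        show "(\<lambda>s. C * s powr (- (2 * \<beta> + n - 1) / (p - 1))) integrable_on {1..r}"
          by (intro integrable_continuous_interval continuous_intros) auto
      qed (use C in auto)
      also have "\<dots> = C / mu"
      proof -
        have e: "- (2 * \<beta> + n - 1) / (p - 1) < - 1" using mu_pos p1 by (simp add: mu_def field_simps)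
        have "((\<lambda>s. C * s powr (- (2 * \<beta> + n - 1) / (p - 1))) has_integral C * (- (1 powr (- (2 * \<beta> + n - 1) / (p - 1) + 1)) / (- (2 * \<beta> + n - 1) / (p - 1) + 1))) {1..}"
          using has_integral_powr_to_inf[OF e, of 1] by (intro has_integral_mult_right) auto
        moreover have "C * (- (1 powr (- (2 * \<beta> + n - 1) / (p - 1) + 1)) / (- (2 * \<beta> + n - 1) / (p - 1) + 1)) = C / mu"
        proof -
          have m: "(1 - (2 * \<beta> + n)) / (p - 1) + 1 = - mu" using p1 by (simp add: mu_def field_simps)
          show ?thesis by (simp add: m)
        qed
        ultimately have "((\<lambda>s. C * s powr (- (2 * \<beta> + n - 1) / (p - 1))) has_integral C / mu) {1..}"
          by simp
        then show ?thesis by (rule integral_unique)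
      qed
      finally show ?thesis .
    qed
    finally have "VV 0 r \<le> C / (1 - gam) + C / mu" using small[of 1] by simp
    then show ?thesis by (simp add: C_def field_simps)
  qed
qed

lemma VV_lim: assumes "r > 0" shows "((\<lambda>a. VV a r) \<longlongrightarrow> VV 0 r) (at_right 0)"
proof (rule tendsto_at_right_sequentially[of 0 1])
  fix X :: "nat \<Rightarrow> real"
  assume X: "\<And>m. 0 < X m" "\<And>m. X m < 1" "X \<longlonglongrightarrow> 0"
  have "(\<lambda>m. integral {0..r} (ww (X m))) \<longlonglongrightarrow> integral {0..r} (ww 0)"
  proof (rule dominated_convergence(2))
    show "ww (X m) integrable_on {0..r}" for m using X(1)[of m] by (intro ww_int) simp
    show "ww 1 integrable_on {0..r}" by (intro ww_int) simp
    show "norm (ww (X m) s) \<le> ww 1 s" if "s \<in> {0..r}" for m s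
      using ww_nonneg[of "X m" s] ww_mono[of "X m" 1 s] X(1,2)[of m] by simp
    show "(\<lambda>m. ww (X m) s) \<longlonglongrightarrow> ww 0 s" if "s \<in> {0..r}" for s
    proof (cases "s > 0")
      case True then show ?thesis using ww_lim X by (simp add: less_imp_le)
    qed (simp add: ww_def)
  qed
  then show "(\<lambda>m. VV (X m) r) \<longlonglongrightarrow> VV 0 r" by (simp add: VV_def)
qed simp

end

lemma norm_line_deriv:
  fixes x e :: "'a::real_inner"
  assumes "x \<noteq> 0"
  shows "((\<lambda>t. norm (x + t *\<^sub>R e)) has_real_derivative (x \<bullet> e / norm x)) (at 0)"
proof -
  have L: "((\<lambda>t. x + t *\<^sub>R e) has_derivative (\<lambda>t. t *\<^sub>R e)) (at 0)"
    by (auto intro!: derivative_eq_intros)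
  have N: "(norm has_derivative (\<lambda>h. h \<bullet> sgn x)) (at ((\<lambda>t. x + t *\<^sub>R e) 0))"
    using has_derivative_norm[OF assms] by simp
  have "((\<lambda>t. norm (x + t *\<^sub>R e)) has_derivative (\<lambda>t. (t *\<^sub>R e) \<bullet> sgn x)) (at 0)"
    using has_derivative_compose[OF L N] by simp
  moreover have "(\<lambda>t. (t *\<^sub>R e) \<bullet> sgn x) = (*) (x \<bullet> e / norm x)"
    by (auto simp: fun_eq_iff sgn_div_norm inner_commute field_simps)
  ultimately show ?thesis unfolding has_field_derivative_def by simp
qed

lemma radial_deriv:
  fixes x e :: "'a::real_inner"
  assumes "x \<noteq> 0" "(F has_real_derivative F') (at (norm x))"
  shows "((\<lambda>t. F (norm (x + t *\<^sub>R e))) has_real_derivative F' * (x \<bullet> e / norm x)) (at 0)"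
proof -
  have "(F has_real_derivative F') (at (norm (x + 0 *\<^sub>R e)))" using assms(2) by simp
  from DERIV_chain2[OF this norm_line_deriv[OF assms(1)]] show ?thesis .
qed

lemma test_props:
  fixes \<phi> :: "real^'n::finite \<Rightarrow> real"
  assumes "test_fun U \<phi>"
  shows "continuous_on UNIV \<phi>" "continuous_on UNIV (partial_deriv i \<phi>)"
    "\<And>x. ((\<lambda>t. \<phi> (x + t *\<^sub>R axis i 1)) has_real_derivative partial_deriv i \<phi> x) (at 0)"
    "compact (closure {x. \<phi> x \<noteq> 0})" "closure {x. \<phi> x \<noteq> 0} \<subseteq> U"
    "\<And>x. x \<notin> closure {x. \<phi> x \<noteq> 0} \<Longrightarrow> \<phi> x = 0"
proof -
  have sm: "\<And>is. iter_partial is \<phi> differentiable_on UNIV" using assms by (simp add: test_fun_def smooth_def)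
  have d0: "\<phi> differentiable_on UNIV" using sm[of "[]"] by simp
  have d1: "partial_deriv i \<phi> differentiable_on UNIV" using sm[of "[i]"] by simp
  show "continuous_on UNIV \<phi>" using d0 by (rule differentiable_imp_continuous_on)
  show "continuous_on UNIV (partial_deriv i \<phi>)" using d1 by (rule differentiable_imp_continuous_on)
  show "compact (closure {x. \<phi> x \<noteq> 0})" "closure {x. \<phi> x \<noteq> 0} \<subseteq> U"
    using assms unfolding test_fun_def by blast+
  show "\<phi> x = 0" if "x \<notin> closure {x. \<phi> x \<noteq> 0}" for x
  proof (rule ccontr)
    assume "\<phi> x \<noteq> 0"
    then have "x \<in> {x. \<phi> x \<noteq> 0}" by simp
    then show False using that closure_subset[of "{x. \<phi> x \<noteq> 0}"] by (auto simp del: mem_Collect_eq)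
  qed
  fix x
  have "\<phi> differentiable (at x)" using d0 by (simp add: differentiable_on_def)
  then have D: "(\<phi> has_derivative frechet_derivative \<phi> (at x)) (at x)"
    by (simp add: frechet_derivative_works)
  have L: "((\<lambda>t. x + t *\<^sub>R axis i 1) has_derivative (\<lambda>t. t *\<^sub>R axis i 1)) (at 0)"
    by (auto intro!: derivative_eq_intros)
  have D': "(\<phi> has_derivative frechet_derivative \<phi> (at x)) (at ((\<lambda>t. x + t *\<^sub>R axis i 1) 0))"
    using D by simp
  have "((\<lambda>t. \<phi> (x + t *\<^sub>R axis i 1)) has_derivative (\<lambda>t. frechet_derivative \<phi> (at x) (t *\<^sub>R axis i 1))) (at 0)"
    using has_derivative_compose[OF L D'] by simp
  moreover have "(\<lambda>t. frechet_derivative \<phi> (at x) (t *\<^sub>R axis i 1)) = (*) (partial_deriv i \<phi> x)"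
  proof -
    have "linear (frechet_derivative \<phi> (at x))" using D by (rule has_derivative_linear)
    then show ?thesis by (auto simp: fun_eq_iff partial_deriv_def linear_scale mult.commute)
  qed
  ultimately show "((\<lambda>t. \<phi> (x + t *\<^sub>R axis i 1)) has_real_derivative partial_deriv i \<phi> x) (at 0)"
    unfolding has_field_derivative_def by simp
qed

lemma loc_Lp_cont:
  fixes u :: "real^'n::finite \<Rightarrow> real"
  assumes "continuous_on U u" "p > 0"
  shows "loc_Lp U p u"
  unfolding loc_Lp_def
proof (intro allI impI conjI)
  fix K assume K: "compact K \<and> K \<subseteq> U"
  have cK: "continuous_on K u" using assms K by (auto intro: continuous_on_subset)
  have i1: "integrable lborel (\<lambda>x. indicator K x *\<^sub>R u x)"
    using K cK by (intro borel_integrable_compact) auto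
  then have "(\<lambda>x. indicator K x *\<^sub>R u x) \<in> borel_measurable lborel" by (rule borel_measurable_integrable)
  then show "set_borel_measurable lebesgue K u" unfolding set_borel_measurable_def
    by (simp add: measurable_completion)
  have i2: "integrable lborel (\<lambda>x. indicator K x *\<^sub>R (\<bar>u x\<bar> powr p))"
    using K cK assms(2) by (intro borel_integrable_compact continuous_on_powr' continuous_intros) auto
  have m2: "(\<lambda>x. indicator K x *\<^sub>R (\<bar>u x\<bar> powr p)) \<in> borel_measurable lborel"
    using i2 by (rule borel_measurable_integrable)
  show "set_integrable lebesgue K (\<lambda>x. \<bar>u x\<bar> powr p)" unfolding set_integrable_def
    using i2 m2 by (simp add: integrable_completion)
qed

context rad begin

definition "Psi a r = Phi a r * r powr (- n)"
definition "Phid r = K * (- \<beta>) * (1 + r\<^sup>2) powr (- \<beta> - 1) * (2 * r)"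
definition "Psid a r = Phid r * r powr (- n) + Phi a r * (- n * r powr (- n - 1))"

lemma Phi_deriv: "(Phi a has_real_derivative Phid r) (at r)"
proof -
  have "((\<lambda>r. L * a powr (p - 1) + K * (1 + r\<^sup>2) powr (- \<beta>)) has_real_derivative
      0 + K * ((- \<beta>) * (1 + r\<^sup>2) powr (- \<beta> - 1) * (0 + 2 * r))) (at r)"
    using sq1[of r]
    by (intro derivative_intros DERIV_powr) (auto intro!: derivative_eq_intros)
  then show ?thesis unfolding Phi_def[abs_def] Phid_def by (simp add: algebra_simps)
qed

lemma Psi_deriv: "r > 0 \<Longrightarrow> (Psi a has_real_derivative Psid a r) (at r)"
  unfolding Psi_def[abs_def] Psid_def
  by (auto intro!: derivative_eq_intros Phi_deriv simp: algebra_simps)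

lemma div_id: assumes "r > 0" shows "r * Psid a r + n * Psi a r = Phid r * r powr (1 - n)"
proof -
  have e1: "r * r powr (- n) = r powr (1 - n)" using assms powr_add[of r 1 "- n"] by simp
  have e2: "r * r powr (- n - 1) = r powr (- n)" using assms powr_add[of r 1 "- n - 1"] by simp
  have "r * Psid a r + n * Psi a r = Phid r * (r * r powr (- n)) - n * Phi a r * (r * r powr (- n - 1)) + n * Phi a r * r powr (- n)"
    by (simp add: Psid_def Psi_def algebra_simps)
  also have "\<dots> = Phid r * r powr (1 - n)" by (simp add: e1 e2)
  finally show ?thesis .
qed

lemma Dv_lower: assumes "r > 0" "n \<ge> 2"
  shows "2 * \<beta> * K * (1 + r\<^sup>2) powr (- \<beta> - n / 2) \<le> - (Phid r * r powr (1 - n))"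
proof -
  have "(1 + r\<^sup>2) powr ((2 - n) / 2) \<le> (r\<^sup>2) powr ((2 - n) / 2)"
    using assms by (intro powr_mono2') auto
  also have "(r\<^sup>2) powr ((2 - n) / 2) = r powr (2 - n)"
  proof -
    have "r\<^sup>2 = r powr 2" using powr_realpow[of r 2] assms by simp
    moreover have "2 * ((2 - n) / 2) = 2 - n" by simp
    ultimately show ?thesis by (simp only: powr_powr)
  qed
  finally have A1: "(1 + r\<^sup>2) powr ((2 - n) / 2) \<le> r powr (2 - n)" .
  have "2 * \<beta> * K * (1 + r\<^sup>2) powr (- \<beta> - n / 2) = 2 * \<beta> * K * ((1 + r\<^sup>2) powr (- \<beta> - 1) * (1 + r\<^sup>2) powr ((2 - n) / 2))"
  proof -
    have "- \<beta> - n / 2 = (- \<beta> - 1) + (2 - n) / 2" by (simp add: field_simps)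
    then show ?thesis by (simp only: powr_add)
  qed
  also have "\<dots> \<le> 2 * \<beta> * K * ((1 + r\<^sup>2) powr (- \<beta> - 1) * r powr (2 - n))"
    using A1 bpos Kpos by (intro mult_left_mono) auto
  also have "\<dots> = - (Phid r * r powr (1 - n))"
  proof -
    have "r * r powr (1 - n) = r powr (2 - n)" using assms powr_add[of r 1 "1 - n"] by simp
    then show ?thesis unfolding Phid_def by (simp add: algebra_simps)
  qed
  finally show ?thesis .
qed

end

lemma axis_comp: "(x + t *\<^sub>R axis i 1) $ i = x $ i + t" for x :: "real^'n::finite"
  by (simp add: axis_def)

lemma inner_ax: "x \<bullet> axis i 1 = x $ i" for x :: "real^'n::finite"
  by (simp add: inner_axis)

lemma sum_sq: "(\<Sum>i\<in>UNIV. x $ i * x $ i) = (norm x)\<^sup>2" for x :: "real^'n::finite"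
  by (simp add: power2_norm_eq_inner inner_vec_def)

context rad begin

lemma W_deriv:
  fixes x :: "real^'n::finite"
  assumes "x \<noteq> 0"
  shows "((\<lambda>t. Psi a (norm (x + t *\<^sub>R axis i 1)) * (x + t *\<^sub>R axis i 1) $ i) has_real_derivative
    Psid a (norm x) * (x $ i / norm x) * x $ i + Psi a (norm x)) (at 0)"
proof -
  have R: "((\<lambda>t. Psi a (norm (x + t *\<^sub>R axis i 1))) has_real_derivative Psid a (norm x) * (x \<bullet> axis i 1 / norm x)) (at 0)"
    by (rule radial_deriv[OF assms Psi_deriv]) (use assms in simp)
  have L: "((\<lambda>t. (x + t *\<^sub>R axis i 1) $ i) has_real_derivative 1) (at 0)"
    unfolding axis_comp by (auto intro!: derivative_eq_intros)
  show ?thesis using DERIV_mult[OF R L] by (simp add: inner_ax axis_comp)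
qed

lemma v_deriv:
  fixes x :: "real^'n::finite"
  assumes "a \<ge> 0" "x \<noteq> 0"
  shows "((\<lambda>t. VV a (norm (x + t *\<^sub>R axis i 1))) has_real_derivative ww a (norm x) / norm x * x $ i) (at 0)"
proof -
  have "((\<lambda>t. VV a (norm (x + t *\<^sub>R axis i 1))) has_real_derivative ww a (norm x) * (x \<bullet> axis i 1 / norm x)) (at 0)"
    by (rule radial_deriv[OF assms(2) VV_deriv]) (use assms in simp_all)
  then show ?thesis by (simp add: inner_ax)
qed

lemma isCont_Psi: "r > 0 \<Longrightarrow> isCont (Psi a) r"
  using Psi_deriv DERIV_isCont by blast

lemma isCont_Psid: "r > 0 \<Longrightarrow> isCont (Psid a) r"
  using sq1[of r] unfolding Psid_def Phid_def Phi_def by (auto intro!: continuous_intros)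

lemma cont_radial:
  fixes G :: "real \<Rightarrow> real"
  assumes GC: "\<And>r. r > 0 \<Longrightarrow> isCont G r" and that: "continuous_on UNIV h"
  shows "continuous_on (- {0}) (\<lambda>x::real^'n::finite. G (norm x) * h x)"
proof (rule continuous_at_imp_continuous_on, intro ballI)
  fix x :: "real^'n" assume "x \<in> - {0}"
  then have "norm x > 0" by simp
  have "isCont (\<lambda>x. G (norm x)) x"
    by (rule isCont_o2[where f=norm and g=G, OF _ GC[OF \<open>norm x > 0\<close>]]) (auto intro: continuous_intros)
  moreover have "isCont h x" using that by (simp add: continuous_on_eq_continuous_at)
  ultimately show "isCont (\<lambda>x. G (norm x) * h x) x" by (intro continuous_intros)
qed

lemma sum_Wd:
  fixes x :: "real^'n::finite"
  assumes "x \<noteq> 0" "n = real CARD('n)"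
  shows "(\<Sum>i\<in>UNIV. Psid a (norm x) * (x $ i / norm x) * x $ i + Psi a (norm x))
    = norm x * Psid a (norm x) + n * Psi a (norm x)"
proof -
  have "(\<Sum>i\<in>UNIV. Psid a (norm x) * (x $ i / norm x) * x $ i) = Psid a (norm x) / norm x * (\<Sum>i\<in>UNIV. x $ i * x $ i)"
    by (simp add: sum_distrib_left sum_divide_distrib algebra_simps)
  also have "\<dots> = norm x * Psid a (norm x)" using assms by (simp add: sum_sq power2_eq_square)
  finally show ?thesis using assms by (simp add: sum.distrib)
qed

lemma integrand_eq:
  fixes x :: "real^'n::finite" and d :: "real^'n"
  assumes "a \<ge> 0"
  defines "g \<equiv> (ww a (norm x) / norm x) *\<^sub>R x"
  shows "norm g powr (p - 2) * A (norm g) * (g \<bullet> d) = (\<Sum>i\<in>UNIV. Psi a (norm x) * x $ i * d $ i)"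
proof (cases "x = 0")
  case True then show ?thesis by (simp add: g_def)
next
  case False
  define r where "r = norm x"
  define w where "w = ww a r"
  have r: "r > 0" using False by (simp add: r_def)
  have w: "w > 0" using ww_pos[OF assms(1) r] by (simp add: w_def)
  have ng: "norm g = w" using r w by (simp add: g_def r_def[symmetric] w_def[symmetric])
  have hw: "hh w = Phi a r / r powr (n - 1)"
    using kinv[OF arg_pos[OF assms(1) r]] r by (simp add: w_def ww_def)
  have wp: "w powr (p - 2) * w = w powr (p - 1)"
    using w powr_add[of w "p - 2" 1] by simp
  have rp: "r powr (n - 1) * r = r powr n"
    using r powr_add[of r "n - 1" 1] by simp
  have "g \<bullet> d = (\<Sum>i\<in>UNIV. (w / r * x $ i) * d $ i)"
    by (simp add: g_def inner_vec_def r_def w_def)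
  also have "\<dots> = w / r * (\<Sum>i\<in>UNIV. x $ i * d $ i)"
    by (subst sum_distrib_left) (simp add: mult.assoc)
  finally have "g \<bullet> d = w / r * (\<Sum>i\<in>UNIV. x $ i * d $ i)" .
  then have "norm g powr (p - 2) * A (norm g) * (g \<bullet> d) = (w powr (p - 2) * w) * A w / r * (\<Sum>i\<in>UNIV. x $ i * d $ i)"
    by (simp add: ng)
  also have "\<dots> = hh w / r * (\<Sum>i\<in>UNIV. x $ i * d $ i)" by (simp add: wp hh_def)
  also have "\<dots> = Phi a r / r powr n * (\<Sum>i\<in>UNIV. x $ i * d $ i)"
    by (simp add: hw rp[symmetric])
  also have "\<dots> = (\<Sum>i\<in>UNIV. Psi a (norm x) * x $ i * d $ i)"
    using r by (simp add: Psi_def sum_distrib_left sum_divide_distrib r_def powr_minus_divide algebra_simps)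
  finally show ?thesis .
qed

end

lemma isCont_nth: "isCont (\<lambda>x::real^'n::finite. x $ i) x"
  by (rule linear_continuous_at[OF bounded_linear_vec_nth])

lemma cont_nth: "continuous_on UNIV (\<lambda>x::real^'n::finite. x $ i)"
  by (rule linear_continuous_on[OF bounded_linear_vec_nth])

lemma isCont_radial: "x \<noteq> 0 \<Longrightarrow> isCont G (norm x) \<Longrightarrow> isCont (\<lambda>x::'a::real_normed_vector. G (norm x)) x"
  by (rule isCont_o2[where f=norm and g=G]) (auto intro: continuous_intros)

context rad begin

lemma supersol:
  fixes f :: "real^'n::finite \<Rightarrow> real"
  assumes nC: "n = real CARD('n)" and n2: "CARD('n) \<ge> 2" and a: "a \<ge> 0"
    and fm: "f \<in> borel_measurable lebesgue" and fM: "AE x in lebesgue. \<bar>f x\<bar> \<le> M"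
    and fb: "AE x in lebesgue. x \<noteq> 0 \<longrightarrow> \<bar>f x\<bar> \<le> 2 * \<beta> * K * (1 + (norm x)\<^sup>2) powr (- \<beta> - n / 2)"
  shows "weak_supersol (- {0}) p A f (\<lambda>x. VV a (norm x))"
proof -
  define g where "g x = (ww a (norm x) / norm x) *\<^sub>R x" for x :: "real^'n"
  have gi: "g x $ i = ww a (norm x) / norm x * x $ i" for x i by (simp add: g_def)
  have U: "open (- {0::real^'n})" by (simp add: open_Compl)
  have p0: "p > 0" using p1 by simp
  have cv: "continuous_on (- {0}) (\<lambda>x::real^'n. VV a (norm x))"
    using cont_radial[of "VV a" "\<lambda>_. 1"] VV_deriv[OF a] DERIV_isCont by (auto intro: continuous_intros)
  have cg: "continuous_on (- {0}) (\<lambda>x. g x $ i)" for i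
    unfolding gi by (rule cont_radial[OF _ cont_nth]) (use ww_cont[OF a] in \<open>auto intro!: continuous_intros\<close>)
  have wg: "weak_grad_W1p_loc (- {0}) p (\<lambda>x. VV a (norm x)) g"
    unfolding weak_grad_W1p_loc_def
  proof (intro conjI allI impI)
    show "loc_Lp (- {0}) p (\<lambda>x::real^'n. VV a (norm x))" by (rule loc_Lp_cont[OF cv p0])
    show "loc_Lp (- {0}) p (\<lambda>x. g x $ i)" for i by (rule loc_Lp_cont[OF cg p0])
    fix \<phi> :: "real^'n \<Rightarrow> real" and i :: 'n assume \<phi>: "test_fun (- {0}) \<phi>"
    note tp = test_props[OF \<phi>]
    show "(\<integral>x. VV a (norm x) * partial_deriv i \<phi> x \<partial>lebesgue) = - (\<integral>x. g x $ i * \<phi> x \<partial>lebesgue)"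
      by (rule ibp_open(3)[OF U _ cv cg tp(3)[where i=i] tp(1) tp(2)[where i=i] tp(4) tp(5) tp(6)])
         (use v_deriv[OF a] in \<open>auto simp: gi\<close>)
  qed
  show ?thesis unfolding weak_supersol_def
  proof (intro exI[of _ g] conjI allI impI, fact wg, elim conjE)
    fix \<eta> :: "real^'n \<Rightarrow> real"
    assume \<eta>: "test_fun (- {0}) \<eta>" and \<eta>0: "\<forall>x. 0 \<le> \<eta> x"
    define C where "C = closure {x. \<eta> x \<noteq> 0}"
    note tp = test_props[OF \<eta>, folded C_def]
    define W where "W i x = Psi a (norm x) * x $ i" for i and x :: "real^'n"
    define Wd where "Wd i x = Psid a (norm x) * (x $ i / norm x) * x $ i + Psi a (norm x)" for i and x :: "real^'n"
    have cW: "continuous_on (- {0}) (W i)" for i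
      unfolding W_def by (rule cont_radial[OF isCont_Psi cont_nth])
    have cWd: "continuous_on (- {0}) (Wd i)" for i
    proof (rule continuous_at_imp_continuous_on, intro ballI)
      fix x :: "real^'n" assume "x \<in> - {0}"
      then have x: "x \<noteq> 0" "norm x > 0" by auto
      show "isCont (Wd i) x" unfolding Wd_def
        using isCont_radial[OF x(1) isCont_Psid[OF x(2)]] isCont_radial[OF x(1) isCont_Psi[OF x(2)]] x
        by (intro continuous_intros isCont_nth) auto
    qed
    have dW: "\<And>x. x \<in> - {0} \<Longrightarrow> ((\<lambda>t. W i (x + t *\<^sub>R axis i 1)) has_real_derivative Wd i x) (at 0)" for i
      unfolding W_def Wd_def by (rule W_deriv) simp
    have ibp: "integrable lebesgue (\<lambda>x. W i x * partial_deriv i \<eta> x)"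
       "integrable lebesgue (\<lambda>x. Wd i x * \<eta> x)"
       "(\<integral>x. W i x * partial_deriv i \<eta> x \<partial>lebesgue) = - (\<integral>x. Wd i x * \<eta> x \<partial>lebesgue)" for i
      using ibp_open[OF U dW cW cWd tp(3)[where i=i] tp(1) tp(2)[where i=i] tp(4) tp(5) tp(6)] by auto
    have C0: "0 \<notin> C" using tp(5) by auto
    have eta0: "\<eta> 0 = 0" using tp(6)[OF C0] .
    have "(\<integral>x. norm (g x) powr (p - 2) * A (norm (g x)) * (g x \<bullet> (\<chi> i. partial_deriv i \<eta> x)) \<partial>lebesgue)
        = (\<integral>x. (\<Sum>i\<in>UNIV. W i x * partial_deriv i \<eta> x) \<partial>lebesgue)"
      apply (rule Bochner_Integration.integral_cong[OF refl])
      apply (simp only: g_def integrand_eq[OF a])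
      apply (simp add: W_def)
      done
    also have "\<dots> = (\<Sum>i\<in>UNIV. (\<integral>x. W i x * partial_deriv i \<eta> x \<partial>lebesgue))"
      by (rule Bochner_Integration.integral_sum) (use ibp in auto)
    also have "\<dots> = (\<Sum>i\<in>UNIV. (\<integral>x. - (Wd i x * \<eta> x) \<partial>lebesgue))"
      using ibp by simp
    also have "\<dots> = (\<integral>x. (\<Sum>i\<in>UNIV. - (Wd i x * \<eta> x)) \<partial>lebesgue)"
      by (rule Bochner_Integration.integral_sum[symmetric]) (use ibp in auto)
    also have "\<dots> = (\<integral>x. (- (\<Sum>i\<in>UNIV. Wd i x)) * \<eta> x \<partial>lebesgue)"
      by (simp add: sum_negf sum_distrib_right)
    finally have LHS: "(\<integral>x. norm (g x) powr (p - 2) * A (norm (g x)) * (g x \<bullet> (\<chi> i. partial_deriv i \<eta> x)) \<partial>lebesgue)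
        = (\<integral>x. (- (\<Sum>i\<in>UNIV. Wd i x)) * \<eta> x \<partial>lebesgue)" .
    have intR: "integrable lebesgue (\<lambda>x. (- (\<Sum>i\<in>UNIV. Wd i x)) * \<eta> x)"
    proof -
      have "integrable lebesgue (\<lambda>x. (\<Sum>i\<in>UNIV. - (Wd i x * \<eta> x)))"
        using ibp by (intro Bochner_Integration.integrable_sum Bochner_Integration.integrable_minus) auto
      then show ?thesis by (simp add: sum_negf sum_distrib_right)
    qed
    obtain R where R: "C \<subseteq> cball 0 R"
    proof -
      obtain b where "\<forall>x\<in>C. norm x \<le> b" using compact_imp_bounded[OF tp(4)] unfolding bounded_iff by blast
      then have "C \<subseteq> cball 0 b" by (auto simp: subset_eq)
      then show ?thesis using that by blast
    qed
    have ietab: "integrable lborel \<eta>"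
    proof (rule integrable_cont_supp[OF tp(1), of R])
      fix x :: "real^'n" assume "R < norm x"
      then have "x \<notin> C" using R by auto
      then show "\<eta> x = 0" by (rule tp(6))
    qed
    have metab: "\<eta> \<in> borel_measurable lborel" using ietab by (rule borel_measurable_integrable)
    have ieta: "integrable lebesgue \<eta>" using ietab metab by (simp add: integrable_completion)
    have intL: "integrable lebesgue (\<lambda>x. f x * \<eta> x)"
    proof (rule Bochner_Integration.integrable_bound[of _ "\<lambda>x. M * \<eta> x"])
      show "integrable lebesgue (\<lambda>x. M * \<eta> x)" using ieta by simp
      have "\<eta> \<in> borel_measurable lebesgue" using metab by (simp add: measurable_completion)
      then show "(\<lambda>x. f x * \<eta> x) \<in> borel_measurable lebesgue" using fm by measurable
      show "AE x in lebesgue. norm (f x * \<eta> x) \<le> norm (M * \<eta> x)"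
        using fM
      proof eventually_elim
        case (elim x)
        have "\<bar>f x\<bar> * \<eta> x \<le> M * \<eta> x" using elim \<eta>0 by (intro mult_right_mono) auto
        moreover have "M * \<eta> x \<le> \<bar>M\<bar> * \<eta> x" using \<eta>0 by (intro mult_right_mono) auto
        ultimately show ?case using \<eta>0[rule_format, of x] by (simp add: abs_mult)
      qed
    qed
    have "(\<integral>x. f x * \<eta> x \<partial>lebesgue) \<le> (\<integral>x. (- (\<Sum>i\<in>UNIV. Wd i x)) * \<eta> x \<partial>lebesgue)"
    proof (rule integral_mono_AE[OF intL intR])
      show "AE x in lebesgue. f x * \<eta> x \<le> - (\<Sum>i\<in>UNIV. Wd i x) * \<eta> x"
        using fb
      proof eventually_elim
        case (elim x)
        show ?case
        proof (cases "x = 0")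
          case True then show ?thesis using eta0 by simp
        next
          case False
          then have r: "norm x > 0" by simp
          have "(\<Sum>i\<in>UNIV. Wd i x) = norm x * Psid a (norm x) + n * Psi a (norm x)"
            unfolding Wd_def by (rule sum_Wd[OF False nC])
          also have "\<dots> = Phid (norm x) * norm x powr (1 - n)" by (rule div_id[OF r])
          finally have "f x \<le> - (\<Sum>i\<in>UNIV. Wd i x)"
            using elim False Dv_lower[OF r] n2 nC by auto
          then show ?thesis using \<eta>0 by (intro mult_right_mono) auto
        qed
      qed
    qed
    then show "(\<integral>x. norm (g x) powr (p - 2) * A (norm (g x)) * (g x \<bullet> (\<chi> i. partial_deriv i \<eta> x)) \<partial>lebesgue)
        \<ge> (\<integral>x. f x * \<eta> x \<partial>lebesgue)" using LHS by simp
  qed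
qed

end

theorem lemma2:
  fixes p L :: real
  assumes n2: "CARD('n::finite) \<ge> 2"
    and pn: "p > real CARD('n)"
    and Lpos: "L > 0"
  shows "\<exists>c0>0. \<forall>(A::real \<Rightarrow> real) \<delta> (f::real^'n \<Rightarrow> real) Cf \<epsilon>.
     continuous_on {0..} A \<and> \<delta> > 0 \<and> (\<forall>t\<ge>0. \<delta> \<le> A t \<and> A t \<le> L) \<and>
     strict_mono_on {0<..} (\<lambda>t. t powr (p - 1) * A t) \<and>
     f \<in> borel_measurable lebesgue \<and> (\<exists>M. AE x in lebesgue. \<bar>f x\<bar> \<le> M) \<and>
     Cf > 0 \<and> \<epsilon> > 0 \<and> (\<exists>R. \<forall>x. norm x \<ge> R \<longrightarrow> \<bar>f x\<bar> \<le> Cf * norm x powr (-(p + \<epsilon>)))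
     \<longrightarrow>
     (\<exists>V :: real \<Rightarrow> real \<Rightarrow> real.
        (\<forall>a\<ge>0. weak_supersol (- {0}) p A f (\<lambda>x. V a (norm x))) \<and>
        (\<forall>a\<ge>0. V a 0 = 0 \<and> mono_on {0<..} (V a)) \<and>
        (\<forall>a>0. \<not> bdd_above (V a ` {0<..}) \<and>
               (\<forall>r\<ge>0. V a r \<ge> c0 * a * r powr ((p - real CARD('n)) / (p - 1)))) \<and>
        (\<exists>C0>0. \<forall>r>0. V 0 r \<le> C0) \<and>
        (\<forall>r>0. ((\<lambda>a. V a r) \<longlongrightarrow> V 0 r) (at_right 0)))"
proof -
  show ?thesis
  proof (intro exI[of _ 1] conjI allI impI, simp)
    fix A :: "real \<Rightarrow> real" and \<delta> :: real and f :: "real^'n \<Rightarrow> real" and Cf \<epsilon> :: real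
    assume H: "continuous_on {0..} A \<and> \<delta> > 0 \<and> (\<forall>t\<ge>0. \<delta> \<le> A t \<and> A t \<le> L) \<and>
     strict_mono_on {0<..} (\<lambda>t. t powr (p - 1) * A t) \<and>
     f \<in> borel_measurable lebesgue \<and> (\<exists>M. AE x in lebesgue. \<bar>f x\<bar> \<le> M) \<and>
     Cf > 0 \<and> \<epsilon> > 0 \<and> (\<exists>R. \<forall>x. norm x \<ge> R \<longrightarrow> \<bar>f x\<bar> \<le> Cf * norm x powr (-(p + \<epsilon>)))"
    then have Acont: "continuous_on {0..} A" and dpos: "\<delta> > 0" and AL: "\<forall>t\<ge>0. \<delta> \<le> A t \<and> A t \<le> L"
      and hmono: "strict_mono_on {0<..} (\<lambda>t. t powr (p - 1) * A t)"
      and fm: "f \<in> borel_measurable lebesgue" and Cf: "Cf > 0" and eps: "\<epsilon> > 0" by auto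
    from H obtain M where fM: "AE x in lebesgue. \<bar>f x\<bar> \<le> M" by auto
    from H obtain R where fR: "\<And>x. norm x \<ge> R \<Longrightarrow> \<bar>f x\<bar> \<le> Cf * norm x powr (-(p + \<epsilon>))" by auto
    define n where "n = real CARD('n)"
    define \<beta> where "\<beta> = (p + \<epsilon> - n) / 2"
    define q where "q = (p + \<epsilon>) / 2"
    define M' where "M' = max M 0"
    define R1 where "R1 = max R 1"
    define K where "K = (M' * (1 + R1\<^sup>2) powr q + Cf * 2 powr q) / (2 * \<beta>)"
    have n2': "n \<ge> 2" using n2 by (simp add: n_def)
    have np: "n < p" using pn by (simp add: n_def)
    have p1: "p > 1" using n2' np by simp
    have bpos: "\<beta> > 0" using np eps by (simp add: \<beta>_def)
    have Kpos: "K > 0" unfolding K_def using bpos Cf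
      by (intro divide_pos_pos add_nonneg_pos mult_nonneg_nonneg mult_pos_pos) (auto simp: M'_def)
    have qb: "- \<beta> - n / 2 = - q" by (simp add: \<beta>_def q_def field_simps)
    have twobK: "2 * \<beta> * K = M' * (1 + R1\<^sup>2) powr q + Cf * 2 powr q" using bpos by (simp add: K_def)
    interpret hyp p \<delta> L A by unfold_locales (use p1 dpos AL Acont hmono in auto)
    interpret R: rad p \<delta> L A n K \<beta>
      by unfold_locales (use n2' np Kpos bpos eps in \<open>auto simp: \<beta>_def\<close>)
    have fb: "AE x in lebesgue. x \<noteq> 0 \<longrightarrow> \<bar>f x\<bar> \<le> 2 * \<beta> * K * (1 + (norm x)\<^sup>2) powr (- \<beta> - n / 2)"
      using fM
    proof eventually_elim
      case (elim x)
      show ?case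
      proof
        assume "x \<noteq> 0"
        define r where "r = norm x"
        have r: "r > 0" using \<open>x \<noteq> 0\<close> by (simp add: r_def)
        have t1: "0 \<le> M' * (1 + R1\<^sup>2) powr q * (1 + r\<^sup>2) powr (- q)" by (simp add: M'_def)
        have t2: "0 \<le> Cf * 2 powr q * (1 + r\<^sup>2) powr (- q)" using Cf by simp
        have "\<bar>f x\<bar> \<le> (M' * (1 + R1\<^sup>2) powr q + Cf * 2 powr q) * (1 + r\<^sup>2) powr (- q)"
        proof (cases "r \<ge> R1")
          case True
          then have rR: "norm x \<ge> R" "r \<ge> 1" by (auto simp: r_def R1_def)
          have "\<bar>f x\<bar> \<le> Cf * r powr (-(p + \<epsilon>))" using fR[OF rR(1)] by (simp add: r_def)
          also have "r powr (-(p + \<epsilon>)) = (r\<^sup>2) powr (- q)"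
          proof -
            have "r\<^sup>2 = r powr 2" using powr_realpow[of r 2] r by simp
            moreover have "2 * (- q) = -(p + \<epsilon>)" by (simp add: q_def field_simps)
            ultimately show ?thesis by (simp only: powr_powr)
          qed
          also have "(r\<^sup>2) powr (- q) = 2 powr q * (2 * r\<^sup>2) powr (- q)"
            using r by (simp add: powr_mult powr_minus field_simps)
          also have "(2 * r\<^sup>2) powr (- q) \<le> (1 + r\<^sup>2) powr (- q)"
          proof (rule powr_mono2')
            show "- q \<le> 0" using p1 eps by (simp add: q_def)
            show "0 < 1 + r\<^sup>2" by (rule R.sq1)
            show "1 + r\<^sup>2 \<le> 2 * r\<^sup>2" using rR(2) by (simp add: power2_eq_square) (metis mult_mono' dual_order.trans mult_1_left zero_le_one)
          qed
          then have "Cf * (2 powr q * (2 * r\<^sup>2) powr (- q)) \<le> Cf * 2 powr q * (1 + r\<^sup>2) powr (- q)"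
            using Cf by (simp add: mult.assoc mult_left_mono)
          finally show ?thesis using t1 by (simp add: distrib_right)
        next
          case False
          have "\<bar>f x\<bar> \<le> M'" using elim by (simp add: M'_def)
          also have "M' = M' * (1 + R1\<^sup>2) powr q * (1 + R1\<^sup>2) powr (- q)"
            using R.sq1[of R1] by (simp add: powr_minus field_simps)
          also have "\<dots> \<le> M' * (1 + R1\<^sup>2) powr q * (1 + r\<^sup>2) powr (- q)"
          proof (rule mult_left_mono)
            show "(1 + R1\<^sup>2) powr (- q) \<le> (1 + r\<^sup>2) powr (- q)"
            proof (rule powr_mono2')
              show "- q \<le> 0" using p1 eps by (simp add: q_def)
              show "0 < 1 + r\<^sup>2" by (rule R.sq1)
              show "1 + r\<^sup>2 \<le> 1 + R1\<^sup>2" using False r by (simp add: power_mono)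
            qed
          qed (simp add: M'_def)
          finally show ?thesis using t2 by (simp add: distrib_right)
        qed
        then show "\<bar>f x\<bar> \<le> 2 * \<beta> * K * (1 + (norm x)\<^sup>2) powr (- \<beta> - n / 2)"
          by (simp add: twobK qb r_def)
      qed
    qed
    have gam1: "1 - R.gam = (p - real CARD('n)) / (p - 1)"
      unfolding R.gam_def using p1 by (simp add: n_def field_simps)
    show "\<exists>V :: real \<Rightarrow> real \<Rightarrow> real.
        (\<forall>a\<ge>0. weak_supersol (- {0}) p A f (\<lambda>x. V a (norm x))) \<and>
        (\<forall>a\<ge>0. V a 0 = 0 \<and> mono_on {0<..} (V a)) \<and>
        (\<forall>a>0. \<not> bdd_above (V a ` {0<..}) \<and>
               (\<forall>r\<ge>0. V a r \<ge> 1 * a * r powr ((p - real CARD('n)) / (p - 1)))) \<and>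
        (\<exists>C0>0. \<forall>r>0. V 0 r \<le> C0) \<and>
        (\<forall>r>0. ((\<lambda>a. V a r) \<longlongrightarrow> V 0 r) (at_right 0))"
    proof (intro exI[of _ R.VV] conjI allI impI)
      fix a :: real assume a: "a \<ge> 0"
      show "weak_supersol (- {0}) p A f (\<lambda>x. R.VV a (norm x))"
        by (rule R.supersol[OF n_def n2 a fm fM fb])
      show "R.VV a 0 = 0" by (rule R.VV_zero)
      show "mono_on {0<..} (R.VV a)"
        unfolding mono_on_def using R.VV_mono[OF a] by auto
    next
      fix a :: real assume a: "a > 0"
      have low: "a * r powr (1 - R.gam) \<le> R.VV a r" if "r \<ge> 0" for r
      proof -
        have "a * r powr (1 - R.gam) \<le> a * r powr (1 - R.gam) / (1 - R.gam)"
        proof -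
          have g: "0 < 1 - R.gam" "1 - R.gam \<le> 1" using R.gam by auto
          have X: "0 \<le> a * r powr (1 - R.gam)" using a by simp
          have "a * r powr (1 - R.gam) * (1 - R.gam) \<le> a * r powr (1 - R.gam) * 1"
            by (rule mult_left_mono[OF g(2) X])
          then show ?thesis using g(1) by (simp add: le_divide_eq)
        qed
        also have "\<dots> \<le> R.VV a r" using R.VV_lower[of a r] a that by simp
        finally show ?thesis .
      qed
      show "R.VV a r \<ge> 1 * a * r powr ((p - real CARD('n)) / (p - 1))" if "r \<ge> 0" for r
        using low[OF that] by (simp add: gam1)
      show "\<not> bdd_above (R.VV a ` {0<..})"
      proof
        assume "bdd_above (R.VV a ` {0<..})"
        then obtain B where B: "\<And>r. r > 0 \<Longrightarrow> R.VV a r \<le> B" by (auto simp: bdd_above_def)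
        define r where "r = ((\<bar>B\<bar> + 1) / a) powr (1 / (1 - R.gam))"
        have r: "r > 0" using a by (simp add: r_def)
        have "r powr (1 - R.gam) = (\<bar>B\<bar> + 1) / a"
          using a R.gam by (simp add: r_def powr_powr)
        then have "a * r powr (1 - R.gam) = \<bar>B\<bar> + 1" using a by simp
        then have "\<bar>B\<bar> + 1 \<le> B" using low[of r] B[OF r] r by simp
        then show False by simp
      qed
    next
      show "\<exists>C0>0. \<forall>r>0. R.VV 0 r \<le> C0"
      proof (intro exI[of _ "(K / \<delta>) powr (1 / (p - 1)) * (1 / (1 - R.gam) + 1 / R.mu) + 1"] conjI allI impI)
        have "0 \<le> (K / \<delta>) powr (1 / (p - 1)) * (1 / (1 - R.gam) + 1 / R.mu)"
          using R.gam R.mu_pos by simp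
        then show "0 < (K / \<delta>) powr (1 / (p - 1)) * (1 / (1 - R.gam) + 1 / R.mu) + 1" by simp
        fix r :: real assume "r > 0"
        then show "R.VV 0 r \<le> (K / \<delta>) powr (1 / (p - 1)) * (1 / (1 - R.gam) + 1 / R.mu) + 1"
          using R.VV0_bound[of r] by simp
      qed
    next
      fix r :: real assume "r > 0"
      then show "((\<lambda>a. R.VV a r) \<longlongrightarrow> R.VV 0 r) (at_right 0)" by (rule R.VV_lim)
    qed
  qed
qed

end
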